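(* Let $(\mathcal{F}_t)_{t\ge0}$ be a filtration and, for each $1\le i\le j\le d$, let $(\gamma^{ij}_t)_{t\ge1}$ be real random variables with $\gamma^{ij}_t$ $\mathcal{F}_t$-measurable. Suppose $\mathbb{E}[\gamma^{ij}_t\mid\mathcal{F}_{t-1}]=0$ and $\mathbb{E}[|\gamma^{ij}_t|^m\mid\mathcal{F}_{t-1}]\le m!$ for all integers $m\ge2$, all $t\ge1$ and all $1\le i\le j\le d$. Then for every $\tau\ge1$ and every $w>0$, $$\mathbb{P}\Big(\max_{1\le i\le j\le d}\Big|\frac1\tau\sum_{t=1}^\tau\gamma^{ij}_t\Big|\ge w+\sqrt{2w}+\sqrt{\frac{4\log(2d^2)}{\tau}}+\frac{2\log(2d^2)}{\tau}\Big)\le\exp\Big(-\frac{\tau w}{2}\Big).$$ *)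

theory Defs
  imports "HOL-Probability.Probability"
begin

end

theory Submission
  imports Defs "HOL-Probability.Probability"
begin

lemma exp_rem_series:
  fixes y :: real
  shows "(\<lambda>i. y ^ (i + 2) / fact (i + 2)) sums (exp y - 1 - y)"
proof -
  have "(\<lambda>n. y ^ n /\<^sub>R fact n) sums exp y" by (rule exp_converges)
  then have "(\<lambda>n. y ^ n / fact n) sums exp y" by (simp add: divide_inverse mult.commute)
  from sums_split_initial_segment[OF this, of 2]
  show ?thesis by (simp add: numeral_2_eq_2 diff_diff_eq)
qed

lemma exp_rem_le:
  fixes y :: real
  shows "exp y - 1 - y \<le> (\<Sum>i. \<bar>y\<bar> ^ (i + 2) / fact (i + 2))"
proof -
  have "exp y - 1 - y = (\<Sum>i. y ^ (i + 2) / fact (i + 2))"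
    using exp_rem_series[of y] by (simp add: sums_iff)
  also have "\<dots> \<le> (\<Sum>i. \<bar>y\<bar> ^ (i + 2) / fact (i + 2))"
  proof (rule suminf_le)
    fix i show "y ^ (i + 2) / fact (i + 2) \<le> \<bar>y\<bar> ^ (i + 2) / fact (i + 2)"
    proof (intro divide_right_mono)
      have "y ^ (i + 2) \<le> \<bar>y ^ (i + 2)\<bar>" by (rule abs_ge_self)
      then show "y ^ (i + 2) \<le> \<bar>y\<bar> ^ (i + 2)" by (simp only: power_abs)
    qed simp
  qed (rule sums_summable[OF exp_rem_series])+
  finally show ?thesis .
qed

lemma geom2:
  fixes l :: real assumes "0 < l" "l < 1"
  shows "(\<Sum>i. ennreal (l ^ (i + 2))) = ennreal (l^2 / (1 - l))"
proof -
  have "(\<lambda>i. l^2 * l ^ i) sums (l^2 * (1 / (1 - l)))"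
    by (rule sums_mult, rule geometric_sums) (use assms in auto)
  moreover have "(\<lambda>i. l ^ (i + 2)) = (\<lambda>i. l^2 * l ^ i)"
    by (rule ext) (simp add: power_add power2_eq_square mult_ac)
  ultimately have s: "(\<lambda>i. l ^ (i + 2)) sums (l^2 / (1 - l))"
    by simp
  have nn: "\<And>i. 0 \<le> l ^ (i + 2)" using assms by simp
  show ?thesis
    unfolding suminf_ennreal2[OF nn sums_summable[OF s]] sums_unique[OF s, symmetric] ..
qed

lemma step:
  fixes M G :: "'a measure" and Z Y :: "'a \<Rightarrow> real" and l :: real
  assumes "prob_space M" and sub: "subalgebra M G"
    and Zm: "Z \<in> borel_measurable G" and Zpos: "\<And>x. Z x \<ge> 0" and Zi: "integrable M Z"
    and Ym: "Y \<in> borel_measurable M" and Yi: "integrable M Y"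
    and mean0: "AE x in M. real_cond_exp M G Y x = 0"
    and moments: "\<And>m. m \<ge> 2 \<Longrightarrow>
         AE x in M. nn_cond_exp M G (\<lambda>y. ennreal (\<bar>Y y\<bar> ^ m)) x \<le> ennreal (fact m)"
    and l: "0 < l" "l < 1"
  shows "integrable M (\<lambda>x. Z x * exp (l * Y x))"
    and "(\<integral>x. Z x * exp (l * Y x) \<partial>M) \<le> (1 + l^2 / (1 - l)) * (\<integral>x. Z x \<partial>M)"
proof -
  interpret prob_space M by fact
  interpret finite_measure_subalgebra M G
    by unfold_locales (rule sub)
  have ZmM[measurable]: "Z \<in> borel_measurable M" by (rule measurable_from_subalg[OF sub Zm])
  note Ym[measurable]
  have ZG[measurable]: "(\<lambda>x. ennreal (Z x)) \<in> borel_measurable G" using Zm by measurable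
  define I where "I = (\<integral>\<^sup>+ x. ennreal (Z x) \<partial>M)"
  have IZ: "I = ennreal (\<integral>x. Z x \<partial>M)"
    unfolding I_def by (rule nn_integral_eq_integral[OF Zi]) (simp add: Zpos)
  have mom: "(\<integral>\<^sup>+ x. ennreal (Z x) * ennreal (\<bar>Y x\<bar> ^ m) \<partial>M) \<le> ennreal (fact m) * I"
    if "m \<ge> 2" for m
  proof -
    have "(\<integral>\<^sup>+ x. ennreal (Z x) * ennreal (\<bar>Y x\<bar> ^ m) \<partial>M)
        = (\<integral>\<^sup>+ x. ennreal (Z x) * nn_cond_exp M G (\<lambda>y. ennreal (\<bar>Y y\<bar> ^ m)) x \<partial>M)"
      by (rule nn_cond_exp_intg[symmetric]) measurable
    also have "\<dots> \<le> (\<integral>\<^sup>+ x. ennreal (fact m) * ennreal (Z x) \<partial>M)"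
      using moments[OF that]
    proof (intro nn_integral_mono_AE, eventually_elim)
      case (elim x)
      then show ?case by (metis mult.commute mult_left_mono zero_le)
    qed
    also have "\<dots> = ennreal (fact m) * I"
      unfolding I_def by (rule nn_integral_cmult) measurable
    finally show ?thesis .
  qed
  have Ifin: "I < \<infinity>" using IZ by simp
  have Ipos: "0 \<le> (\<integral>x. Z x \<partial>M)" by (intro integral_nonneg_AE) (simp add: Zpos)
  have "(\<integral>\<^sup>+ x. ennreal (norm (Z x * Y x)) \<partial>M)
      \<le> (\<integral>\<^sup>+ x. ennreal (Z x) + ennreal (Z x) * ennreal (\<bar>Y x\<bar> ^ 2) \<partial>M)"
  proof (rule nn_integral_mono)
    fix x
    have h: "0 \<le> (\<bar>Y x\<bar> - 1)^2" by simp
    have "\<bar>Y x\<bar> \<le> 1 + \<bar>Y x\<bar>^2"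
      using h abs_ge_zero[of "Y x"] unfolding power2_eq_square by (simp add: algebra_simps)
    then have "norm (Z x * Y x) \<le> Z x + Z x * \<bar>Y x\<bar>^2"
      using Zpos[of x] by (simp add: abs_mult) (metis distrib_left mult.right_neutral mult_left_mono)
    then show "ennreal (norm (Z x * Y x)) \<le> ennreal (Z x) + ennreal (Z x) * ennreal (\<bar>Y x\<bar> ^ 2)"
      using Zpos[of x] by (simp add: ennreal_plus[symmetric] ennreal_mult[symmetric] del: ennreal_plus)
  qed
  also have "\<dots> = I + (\<integral>\<^sup>+ x. ennreal (Z x) * ennreal (\<bar>Y x\<bar> ^ 2) \<partial>M)"
    unfolding I_def by (rule nn_integral_add) measurable
  also have "\<dots> \<le> I + ennreal (fact 2) * I"
    using mom[of 2] by (intro add_left_mono) auto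
  also have "\<dots> < \<infinity>" using Ifin by (simp add: ennreal_mult_less_top)
  finally have ZYi: "integrable M (\<lambda>x. Z x * Y x)"
    by (intro integrableI_bounded) measurable
  have ZY0: "(\<integral>x. Z x * Y x \<partial>M) = 0"
  proof -
    have "(\<integral>x. Z x * Y x \<partial>M) = (\<integral>x. Z x * real_cond_exp M G Y x \<partial>M)"
      by (rule real_cond_exp_intg(2)[symmetric, OF ZYi Zm Ym])
    also have "\<dots> = (\<integral>x. 0 \<partial>M)"
      by (rule integral_cong_AE) (use mean0 in auto)
    finally show ?thesis by simp
  qed
  define R where "R x = exp (l * Y x) - 1 - l * Y x" for x
  have Rpos: "R x \<ge> 0" for x unfolding R_def using exp_ge_add_one_self[of "l * Y x"] by linarith
  have Rm[measurable]: "R \<in> borel_measurable M" unfolding R_def by measurable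
  have "(\<integral>\<^sup>+ x. ennreal (Z x * R x) \<partial>M)
     \<le> (\<integral>\<^sup>+ x. (\<Sum>i. ennreal (l ^ (i + 2) / fact (i + 2)) * (ennreal (Z x) * ennreal (\<bar>Y x\<bar> ^ (i + 2)))) \<partial>M)"
  proof (rule nn_integral_mono)
    fix x
    have "R x \<le> (\<Sum>i. \<bar>l * Y x\<bar> ^ (i + 2) / fact (i + 2))"
      unfolding R_def by (rule exp_rem_le)
    also have "\<dots> = (\<Sum>i. l ^ (i + 2) / fact (i + 2) * \<bar>Y x\<bar> ^ (i + 2))"
      by (intro arg_cong[where f=suminf] ext) (simp add: abs_mult power_mult_distrib abs_of_pos[OF l(1)])
    finally have "Z x * R x \<le> Z x * (\<Sum>i. l ^ (i + 2) / fact (i + 2) * \<bar>Y x\<bar> ^ (i + 2))"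
      using Zpos[of x] by (rule mult_left_mono)
    then have "ennreal (Z x * R x) \<le> ennreal (Z x * (\<Sum>i. l ^ (i + 2) / fact (i + 2) * \<bar>Y x\<bar> ^ (i + 2)))"
      by (rule ennreal_leI)
    also have "\<dots> = ennreal (Z x) * (\<Sum>i. ennreal (l ^ (i + 2) / fact (i + 2) * \<bar>Y x\<bar> ^ (i + 2)))"
    proof -
      have sm: "summable (\<lambda>i. \<bar>l * Y x\<bar> ^ (i + 2) / fact (i + 2))"
        using exp_rem_series[of "\<bar>l * Y x\<bar>"] by (simp add: sums_iff)
      have eqf: "(\<lambda>i. \<bar>l * Y x\<bar> ^ (i + 2) / fact (i + 2)) = (\<lambda>i. l ^ (i + 2) / fact (i + 2) * \<bar>Y x\<bar> ^ (i + 2))"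
        by (intro ext) (simp add: abs_mult power_mult_distrib abs_of_pos[OF l(1)])
      have sm2: "summable (\<lambda>i. l ^ (i + 2) / fact (i + 2) * \<bar>Y x\<bar> ^ (i + 2))"
        using sm unfolding eqf .
      have nn: "\<And>i. 0 \<le> l ^ (i + 2) / fact (i + 2) * \<bar>Y x\<bar> ^ (i + 2)"
        using l by simp
      have "ennreal (Z x * (\<Sum>i. l ^ (i + 2) / fact (i + 2) * \<bar>Y x\<bar> ^ (i + 2)))
          = ennreal (Z x) * ennreal (\<Sum>i. l ^ (i + 2) / fact (i + 2) * \<bar>Y x\<bar> ^ (i + 2))"
        by (rule ennreal_mult) (use Zpos[of x] in simp, use nn sm2 in \<open>simp add: suminf_nonneg\<close>)
      also have "\<dots> = ennreal (Z x) * (\<Sum>i. ennreal (l ^ (i + 2) / fact (i + 2) * \<bar>Y x\<bar> ^ (i + 2)))"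
        by (simp only: suminf_ennreal2[OF nn sm2])
      finally show ?thesis .
    qed
    also have "\<dots> = (\<Sum>i. ennreal (Z x) * ennreal (l ^ (i + 2) / fact (i + 2) * \<bar>Y x\<bar> ^ (i + 2)))"
      by (rule ennreal_suminf_cmult[symmetric])
    also have "\<dots> = (\<Sum>i. ennreal (l ^ (i + 2) / fact (i + 2)) * (ennreal (Z x) * ennreal (\<bar>Y x\<bar> ^ (i + 2))))"
    proof (intro arg_cong[where f=suminf] ext)
      fix i
      have "ennreal (l ^ (i + 2) / fact (i + 2) * \<bar>Y x\<bar> ^ (i + 2)) = ennreal (l ^ (i + 2) / fact (i + 2)) * ennreal (\<bar>Y x\<bar> ^ (i + 2))"
        by (rule ennreal_mult) (use l in auto)
      then show "ennreal (Z x) * ennreal (l ^ (i + 2) / fact (i + 2) * \<bar>Y x\<bar> ^ (i + 2)) = ennreal (l ^ (i + 2) / fact (i + 2)) * (ennreal (Z x) * ennreal (\<bar>Y x\<bar> ^ (i + 2)))"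
        by (simp only: mult_ac)
    qed
    finally show "ennreal (Z x * R x) \<le> \<dots>" .
  qed
  also have "\<dots> = (\<Sum>i. \<integral>\<^sup>+ x. ennreal (l ^ (i + 2) / fact (i + 2)) * (ennreal (Z x) * ennreal (\<bar>Y x\<bar> ^ (i + 2))) \<partial>M)"
    by (rule nn_integral_suminf) measurable
  also have "\<dots> = (\<Sum>i. ennreal (l ^ (i + 2) / fact (i + 2)) * (\<integral>\<^sup>+ x. ennreal (Z x) * ennreal (\<bar>Y x\<bar> ^ (i + 2)) \<partial>M))"
    by (subst nn_integral_cmult) (auto)
  also have "\<dots> \<le> (\<Sum>i. ennreal (l ^ (i + 2)) * I)"
  proof (rule suminf_le)
    fix i
    have "ennreal (l ^ (i + 2) / fact (i + 2)) * (\<integral>\<^sup>+ x. ennreal (Z x) * ennreal (\<bar>Y x\<bar> ^ (i + 2)) \<partial>M)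
        \<le> ennreal (l ^ (i + 2) / fact (i + 2)) * (ennreal (fact (i + 2)) * I)"
      by (intro mult_left_mono mom) auto
    also have "\<dots> = ennreal (l ^ (i + 2)) * I"
      using l by (simp add: ennreal_mult[symmetric] mult.assoc[symmetric] del: ennreal_mult)
    finally show "ennreal (l ^ (i + 2) / fact (i + 2)) * (\<integral>\<^sup>+ x. ennreal (Z x) * ennreal (\<bar>Y x\<bar> ^ (i + 2)) \<partial>M)
        \<le> ennreal (l ^ (i + 2)) * I" .
  qed auto
  also have "\<dots> = ennreal (l^2 / (1 - l)) * I"
    using geom2[OF l] by (simp add: ennreal_suminf_multc)
  finally have ZRle: "(\<integral>\<^sup>+ x. ennreal (Z x * R x) \<partial>M) \<le> ennreal (l^2 / (1 - l)) * I" .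
  have ZRi: "integrable M (\<lambda>x. Z x * R x)"
  proof (rule integrableI_bounded)
    have "(\<integral>\<^sup>+ x. ennreal (norm (Z x * R x)) \<partial>M) = (\<integral>\<^sup>+ x. ennreal (Z x * R x) \<partial>M)"
      using Zpos Rpos by (simp add: abs_mult)
    also have "\<dots> < \<infinity>"
    proof (rule le_less_trans[OF ZRle])
      show "ennreal (l^2 / (1 - l)) * I < \<infinity>" using Ifin by (simp add: ennreal_mult_less_top)
    qed
    finally show "(\<integral>\<^sup>+ x. ennreal (norm (Z x * R x)) \<partial>M) < \<infinity>" .
  qed measurable
  have "ennreal (\<integral>x. Z x * R x \<partial>M) = (\<integral>\<^sup>+ x. ennreal (Z x * R x) \<partial>M)"
    by (rule nn_integral_eq_integral[symmetric, OF ZRi]) (use Zpos Rpos in auto)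
  also have "\<dots> \<le> ennreal (l^2 / (1 - l)) * I" by (rule ZRle)
  also have "\<dots> = ennreal (l^2 / (1 - l) * (\<integral>x. Z x \<partial>M))"
    unfolding IZ by (rule ennreal_mult[symmetric]) (use l Ipos in auto)
  finally have ZRint: "(\<integral>x. Z x * R x \<partial>M) \<le> l^2 / (1 - l) * (\<integral>x. Z x \<partial>M)"
    using l Ipos by (subst (asm) ennreal_le_iff) auto
  have eq: "Z x * exp (l * Y x) = Z x + l * (Z x * Y x) + Z x * R x" for x
    unfolding R_def by (simp add: algebra_simps)
  show "integrable M (\<lambda>x. Z x * exp (l * Y x))"
    unfolding eq using Zi ZYi ZRi by auto
  have "(\<integral>x. Z x * exp (l * Y x) \<partial>M) = (\<integral>x. Z x \<partial>M) + l * (\<integral>x. Z x * Y x \<partial>M) + (\<integral>x. Z x * R x \<partial>M)"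
    unfolding eq using Zi ZYi ZRi by simp
  also have "\<dots> \<le> (1 + l^2 / (1 - l)) * (\<integral>x. Z x \<partial>M)"
    using ZY0 ZRint by (simp add: algebra_simps)
  finally show "(\<integral>x. Z x * exp (l * Y x) \<partial>M) \<le> (1 + l^2 / (1 - l)) * (\<integral>x. Z x \<partial>M)" .
qed


lemma mgf:
  fixes M :: "'a measure" and F :: "nat \<Rightarrow> 'a measure" and X :: "nat \<Rightarrow> 'a \<Rightarrow> real"
  assumes P: "prob_space M" and sub: "\<And>t. subalgebra M (F t)"
    and mono: "\<And>s t. s \<le> t \<Longrightarrow> sets (F s) \<subseteq> sets (F t)"
    and Xm: "\<And>t. t \<ge> 1 \<Longrightarrow> X t \<in> borel_measurable (F t)"
    and Xi: "\<And>t. t \<ge> 1 \<Longrightarrow> integrable M (X t)"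
    and mean0: "\<And>t. t \<ge> 1 \<Longrightarrow> AE x in M. real_cond_exp M (F (t - 1)) (X t) x = 0"
    and mom: "\<And>t m. t \<ge> 1 \<Longrightarrow> m \<ge> 2 \<Longrightarrow>
       AE x in M. nn_cond_exp M (F (t - 1)) (\<lambda>y. ennreal (\<bar>X t y\<bar> ^ m)) x \<le> ennreal (fact m)"
    and l: "0 < l" "l < 1"
  shows "integrable M (\<lambda>x. exp (l * (\<Sum>t=1..n. X t x))) \<and>
         (\<integral>x. exp (l * (\<Sum>t=1..n. X t x)) \<partial>M) \<le> (1 + l^2 / (1 - l)) ^ n"
proof (induction n)
  case 0
  interpret prob_space M by fact
  show ?case by simp
next
  case (Suc n)
  have subFF: "subalgebra (F n) (F t)" if "t \<le> n" for t
    using sub[of t] sub[of n] mono[OF that] unfolding subalgebra_def by auto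
  have S: "(\<lambda>x. \<Sum>t=1..n. X t x) \<in> borel_measurable (F n)"
    by (rule borel_measurable_sum) (auto intro: measurable_from_subalg[OF subFF Xm])
  note S[measurable]
  have Zm: "(\<lambda>x. exp (l * (\<Sum>t=1..n. X t x))) \<in> borel_measurable (F n)" by measurable
  have XM: "X (Suc n) \<in> borel_measurable M"
    by (rule measurable_from_subalg[OF sub Xm]) simp
  have st: "integrable M (\<lambda>x. exp (l * (\<Sum>t=1..n. X t x)) * exp (l * X (Suc n) x))"
     "(\<integral>x. exp (l * (\<Sum>t=1..n. X t x)) * exp (l * X (Suc n) x) \<partial>M)
       \<le> (1 + l^2 / (1 - l)) * (\<integral>x. exp (l * (\<Sum>t=1..n. X t x)) \<partial>M)"
    using step[OF P sub[of n] Zm _ conjunct1[OF Suc.IH] XM Xi[of "Suc n"] _ _ l]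
      mean0[of "Suc n"] mom[of "Suc n"] by auto
  have eq: "exp (l * (\<Sum>t=1..Suc n. X t x)) = exp (l * (\<Sum>t=1..n. X t x)) * exp (l * X (Suc n) x)" for x
    by (simp add: atLeastAtMostSuc_conv distrib_left exp_add mult.commute)
  have c: "0 \<le> 1 + l^2 / (1 - l)" using l by simp
  show ?case
    unfolding eq
    using st conjunct2[OF Suc.IH] c
    by (auto intro: order_trans mult_left_mono)
qed

lemma tail:
  fixes M :: "'a measure" and F :: "nat \<Rightarrow> 'a measure" and X :: "nat \<Rightarrow> 'a \<Rightarrow> real"
  assumes P: "prob_space M" and sub: "\<And>t. subalgebra M (F t)"
    and mono: "\<And>s t. s \<le> t \<Longrightarrow> sets (F s) \<subseteq> sets (F t)"
    and Xm: "\<And>t. t \<ge> 1 \<Longrightarrow> X t \<in> borel_measurable (F t)"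
    and Xi: "\<And>t. t \<ge> 1 \<Longrightarrow> integrable M (X t)"
    and mean0: "\<And>t. t \<ge> 1 \<Longrightarrow> AE x in M. real_cond_exp M (F (t - 1)) (X t) x = 0"
    and mom: "\<And>t m. t \<ge> 1 \<Longrightarrow> m \<ge> 2 \<Longrightarrow>
       AE x in M. nn_cond_exp M (F (t - 1)) (\<lambda>y. ennreal (\<bar>X t y\<bar> ^ m)) x \<le> ennreal (fact m)"
    and l: "0 < l" "l < 1"
  shows "measure M {x \<in> space M. a \<le> (\<Sum>t=1..n. X t x)} \<le> exp (- (l * a)) * (1 + l^2 / (1 - l)) ^ n"
proof -
  interpret prob_space M by fact
  note m = mgf[where M=M and F=F and X=X and l=l and n=n, OF P sub mono Xm Xi mean0 mom l]
  have "measure M {x \<in> space M. a \<le> (\<Sum>t=1..n. X t x)}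
      = measure M {x \<in> space M. exp (l * a) \<le> exp (l * (\<Sum>t=1..n. X t x))}"
    using l by simp
  also have "\<dots> \<le> (\<integral>x. exp (l * (\<Sum>t=1..n. X t x)) \<partial>M) / exp (l * a)"
    by (rule integral_Markov_inequality_measure[OF conjunct1[OF m], of "space M"]) auto
  also have "\<dots> \<le> (1 + l^2 / (1 - l)) ^ n / exp (l * a)"
    using conjunct2[OF m] by (simp add: divide_right_mono)
  also have "\<dots> = exp (- (l * a)) * (1 + l^2 / (1 - l)) ^ n"
    by (simp add: exp_minus field_simps)
  finally show ?thesis .
qed

lemma lam_alg:
  fixes s l :: real assumes s0: "s > 0" and l_def: "l = s / (1 + s)"
  shows "l^2 / (1 - l) = s^2 / (1 + s)" "l * (2 * s + s^2) - l^2 / (1 - l) = s^2"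
proof -
  have ne: "1 + s \<noteq> 0" using s0 by simp
  have h1: "1 - l = 1 / (1 + s)" unfolding l_def using ne by (simp add: field_simps)
  have "l^2 / (1 - l) = l^2 * (1 + s)" unfolding h1 by simp
  also have "\<dots> = s^2 / (1 + s)" unfolding l_def power_divide using ne
    by (simp add: power2_eq_square)
  finally show h2: "l^2 / (1 - l) = s^2 / (1 + s)" .
  have h3: "l * (2 * s + s^2) = s^2 * (2 + s) / (1 + s)" unfolding l_def using ne
    by (simp add: power2_eq_square algebra_simps add_divide_distrib)
  have h4: "s^2 * (2 + s) / (1 + s) - s^2 / (1 + s) = s^2"
  proof -
    have "s^2 * (2 + s) / (1 + s) - s^2 / (1 + s) = (s^2 * (2 + s) - s^2) / (1 + s)"
      by (rule diff_divide_distrib[symmetric])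
    also have "s^2 * (2 + s) - s^2 = s^2 * (1 + s)" by (simp add: algebra_simps)
    also have "s^2 * (1 + s) / (1 + s) = s^2" using ne by simp
    finally show ?thesis .
  qed
  show "l * (2 * s + s^2) - l^2 / (1 - l) = s^2"
    unfolding h2 h3 h4 ..
qed

theorem lemma8:
  fixes M :: "'a measure"
    and F :: "nat \<Rightarrow> 'a measure"
    and \<gamma> :: "nat \<Rightarrow> nat \<Rightarrow> nat \<Rightarrow> 'a \<Rightarrow> real"
    and d :: nat and \<tau> :: nat and w :: real
  assumes "prob_space M"
    and filt_sub: "\<And>t. subalgebra M (F t)"
    and filt_mono: "\<And>s t. s \<le> t \<Longrightarrow> sets (F s) \<subseteq> sets (F t)"
    and adapted: "\<And>i j t. 1 \<le> i \<Longrightarrow> i \<le> j \<Longrightarrow> j \<le> d \<Longrightarrow> t \<ge> 1 \<Longrightarrow>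
                    \<gamma> i j t \<in> borel_measurable (F t)"
    and integr: "\<And>i j t. 1 \<le> i \<Longrightarrow> i \<le> j \<Longrightarrow> j \<le> d \<Longrightarrow> t \<ge> 1 \<Longrightarrow>
                    integrable M (\<gamma> i j t)"
    and mean0: "\<And>i j t. 1 \<le> i \<Longrightarrow> i \<le> j \<Longrightarrow> j \<le> d \<Longrightarrow> t \<ge> 1 \<Longrightarrow>
                    AE x in M. real_cond_exp M (F (t - 1)) (\<gamma> i j t) x = 0"
    and moments: "\<And>i j t m. 1 \<le> i \<Longrightarrow> i \<le> j \<Longrightarrow> j \<le> d \<Longrightarrow> t \<ge> 1 \<Longrightarrow> m \<ge> 2 \<Longrightarrow>
                    AE x in M. nn_cond_exp M (F (t - 1)) (\<lambda>y. ennreal (\<bar>\<gamma> i j t y\<bar> ^ m)) x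
                               \<le> ennreal (fact m)"
    and "d \<ge> 1" and "\<tau> \<ge> 1" and "w > 0"
  shows "measure M {x \<in> space M.
            Max {\<bar>(1 / real \<tau>) * (\<Sum>t = 1..\<tau>. \<gamma> i j t x)\<bar> | i j. 1 \<le> i \<and> i \<le> j \<and> j \<le> d}
              \<ge> w + sqrt (2 * w) + sqrt (4 * ln (2 * real d ^ 2) / real \<tau>)
                  + 2 * ln (2 * real d ^ 2) / real \<tau>}
         \<le> exp (- (real \<tau> * w / 2))"
proof -
  note P = assms(1)
  interpret prob_space M by fact
  have d1: "real d \<ge> 1" using assms by simp
  have tau1: "real \<tau> \<ge> 1" using assms by simp
  have w: "w > 0" by fact
  define L where "L = ln (2 * real d ^ 2)"
  define u where "u = w / 2 + L / real \<tau>"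
  define s where "s = sqrt u"
  define l where "l = s / (1 + s)"
  define c where "c = 1 + l^2 / (1 - l)"
  define thr where "thr = w + sqrt (2 * w) + sqrt (4 * L / real \<tau>) + 2 * L / real \<tau>"
  have "1 \<le> real d ^ 2" using d1 by (rule one_le_power)
  then have dd: "2 * real d ^ 2 \<ge> 1" by linarith
  have L0: "L \<ge> 0" unfolding L_def using dd by simp
  have "0 \<le> L / real \<tau>" using L0 by simp
  then have u0: "u > 0" unfolding u_def using w by linarith
  have s0: "s > 0" unfolding s_def using u0 by simp
  have ss: "s^2 = u" unfolding s_def using u0 by simp
  have l0: "0 < l" "l < 1" unfolding l_def using s0 by auto
  have thr_ge: "thr \<ge> 2 * s + s^2"
  proof -
    have s4: "sqrt 4 = (2::real)" by (rule real_sqrt_unique) auto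
    have u4: "4 * u = 2 * w + 4 * L / real \<tau>" unfolding u_def by (simp add: field_simps)
    have "2 * s = sqrt (4 * u)" unfolding s_def real_sqrt_mult s4 ..
    also have "\<dots> = sqrt (2 * w + 4 * L / real \<tau>)" unfolding u4 ..
    finally have "2 * s = sqrt (2 * w + 4 * L / real \<tau>)" .
    also have "\<dots> \<le> sqrt (2 * w) + sqrt (4 * L / real \<tau>)"
      by (rule sqrt_add_le_add_sqrt) (use w L0 in auto)
    finally have a: "2 * s \<le> sqrt (2 * w) + sqrt (4 * L / real \<tau>)" .
    have b: "s^2 \<le> w + 2 * L / real \<tau>"
      unfolding ss u_def using w L0 tau1 by (simp add: field_simps)
    show ?thesis unfolding thr_def using a b by linarith
  qed
  have key: "l * thr - l^2 / (1 - l) \<ge> u"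
  proof -
    have "l * (2 * s + s^2) - l^2 / (1 - l) = s^2"
      by (rule lam_alg(2)[OF s0 l_def])
    moreover have "l * thr \<ge> l * (2 * s + s^2)" using thr_ge l0 by simp
    ultimately show ?thesis using ss by linarith
  qed
  have one: "measure M {x \<in> space M. real \<tau> * thr \<le> (\<Sum>t=1..\<tau>. X t x)} \<le> exp (- (real \<tau> * u))"
    if Xm: "\<And>t. t \<ge> 1 \<Longrightarrow> X t \<in> borel_measurable (F t)"
    and Xi: "\<And>t. t \<ge> 1 \<Longrightarrow> integrable M (X t)"
    and Xmean0: "\<And>t. t \<ge> 1 \<Longrightarrow> AE x in M. real_cond_exp M (F (t - 1)) (X t) x = 0"
    and Xmom: "\<And>t m. t \<ge> 1 \<Longrightarrow> m \<ge> 2 \<Longrightarrow>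
       AE x in M. nn_cond_exp M (F (t - 1)) (\<lambda>y. ennreal (\<bar>X t y\<bar> ^ m)) x \<le> ennreal (fact m)"
    for X :: "nat \<Rightarrow> 'a \<Rightarrow> real"
  proof -
    have "measure M {x \<in> space M. real \<tau> * thr \<le> (\<Sum>t=1..\<tau>. X t x)}
        \<le> exp (- (l * (real \<tau> * thr))) * c ^ \<tau>"
      unfolding c_def by (rule tail[where M=M and F=F and X=X and l=l, OF P filt_sub filt_mono Xm Xi Xmean0 Xmom l0])
    also have "\<dots> \<le> exp (- (l * (real \<tau> * thr))) * exp (l^2 / (1 - l)) ^ \<tau>"
    proof (intro mult_left_mono power_mono)
      show "c \<le> exp (l^2 / (1 - l))" unfolding c_def using exp_ge_add_one_self[of "l^2 / (1 - l)"] by linarith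
      show "0 \<le> c" unfolding c_def using l0 by simp
    qed simp
    also have "\<dots> = exp (- (real \<tau> * (l * thr - l^2 / (1 - l))))"
      by (simp add: exp_of_nat_mult[symmetric] exp_add[symmetric] algebra_simps)
    also have "\<dots> \<le> exp (- (real \<tau> * u))"
      using key tau1 by (simp add: mult_left_mono)
    finally show ?thesis .
  qed
  define Pr where "Pr = {(i, j). 1 \<le> i \<and> i \<le> j \<and> j \<le> (d::nat)}"
  define Bp where "Bp p = {x \<in> space M. real \<tau> * thr \<le> (\<Sum>t=1..\<tau>. \<gamma> (fst p) (snd p) t x)}" for p
  define Bm where "Bm p = {x \<in> space M. real \<tau> * thr \<le> (\<Sum>t=1..\<tau>. - \<gamma> (fst p) (snd p) t x)}" for p
  have PrS: "Pr \<subseteq> {1..d} \<times> {1..d}" unfolding Pr_def by auto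
  have finPr: "finite Pr" using PrS finite_subset by blast
  have cardPr: "real (card Pr) \<le> real d ^ 2"
  proof -
    have "card Pr \<le> card ({1..d} \<times> {1..d})" by (rule card_mono[OF _ PrS]) simp
    then have "card Pr \<le> d * d" by simp
    then have "real (card Pr) \<le> real (d * d)" by (simp only: of_nat_le_iff)
    then show ?thesis by (simp add: power2_eq_square)
  qed
  have gM: "\<gamma> i j t \<in> borel_measurable M" if "(i, j) \<in> Pr" "t \<in> {1..\<tau>}" for i j t
    using that by (intro measurable_from_subalg[OF filt_sub adapted]) (auto simp: Pr_def)
  have SM: "(\<lambda>x. \<Sum>t=1..\<tau>. \<gamma> i j t x) \<in> borel_measurable M" if "(i, j) \<in> Pr" for i j
    by (rule borel_measurable_sum) (rule gM[OF that])
  have SM2: "(\<lambda>x. \<Sum>t=1..\<tau>. - \<gamma> i j t x) \<in> borel_measurable M" if "(i, j) \<in> Pr" for i j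
    by (rule borel_measurable_sum) (rule borel_measurable_uminus, rule gM[OF that])
  have Bsets: "Bp p \<in> sets M" "Bm p \<in> sets M" if "p \<in> Pr" for p
  proof -
    obtain i j where p: "p = (i, j)" by force
    note SM[OF that[unfolded p], measurable] SM2[OF that[unfolded p], measurable]
    show "Bp p \<in> sets M" "Bm p \<in> sets M" unfolding Bp_def Bm_def p fst_conv snd_conv by measurable
  qed
  have bound: "measure M (Bp p \<union> Bm p) \<le> 2 * exp (- (real \<tau> * u))" if "p \<in> Pr" for p
  proof -
    obtain i j where p: "p = (i, j)" by force
    have ij: "1 \<le> i" "i \<le> j" "j \<le> d" using that p by (auto simp: Pr_def)
    have b1: "measure M (Bp p) \<le> exp (- (real \<tau> * u))"
      unfolding Bp_def p fst_conv snd_conv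
      by (rule one) (use ij adapted integr mean0 moments in auto)
    have b2: "measure M (Bm p) \<le> exp (- (real \<tau> * u))"
      unfolding Bm_def p fst_conv snd_conv
    proof (rule one)
      fix t :: nat assume t: "t \<ge> 1"
      note gm = adapted[OF ij t]
      show "(\<lambda>x. - \<gamma> i j t x) \<in> borel_measurable (F t)" using gm by measurable
      show "integrable M (\<lambda>x. - \<gamma> i j t x)" using integr[OF ij t] by simp
      have sfs: "sigma_finite_subalgebra M (F (t - 1))"
      proof (rule finite_measure_subalgebra_is_sigma_finite)
        show "finite_measure_subalgebra M (F (t - 1))"
          by unfold_locales (rule filt_sub)
      qed
      have "AE x in M. real_cond_exp M (F (t - 1)) (\<lambda>x. (-1) * \<gamma> i j t x) x = (-1) * real_cond_exp M (F (t - 1)) (\<gamma> i j t) x"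
        by (rule sigma_finite_subalgebra.real_cond_exp_cmult[OF sfs integr[OF ij t]])
      then show "AE x in M. real_cond_exp M (F (t - 1)) (\<lambda>x. - \<gamma> i j t x) x = 0"
        using mean0[OF ij t] by eventually_elim simp
      fix m :: nat assume "m \<ge> 2"
      then show "AE x in M. nn_cond_exp M (F (t - 1)) (\<lambda>y. ennreal (\<bar>- \<gamma> i j t y\<bar> ^ m)) x \<le> ennreal (fact m)"
        using moments[OF ij t] by simp
    qed
    have "measure M (Bp p \<union> Bm p) \<le> measure M (Bp p) + measure M (Bm p)"
      by (rule measure_Un_le) (use Bsets[OF that] in auto)
    then show ?thesis using b1 b2 by linarith
  qed
  have sub: "{x \<in> space M.
            Max {\<bar>(1 / real \<tau>) * (\<Sum>t = 1..\<tau>. \<gamma> i j t x)\<bar> | i j. 1 \<le> i \<and> i \<le> j \<and> j \<le> d}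
              \<ge> w + sqrt (2 * w) + sqrt (4 * ln (2 * real d ^ 2) / real \<tau>)
                  + 2 * ln (2 * real d ^ 2) / real \<tau>} \<subseteq> (\<Union>p\<in>Pr. Bp p \<union> Bm p)"
  proof
    fix x assume x: "x \<in> {x \<in> space M.
            Max {\<bar>(1 / real \<tau>) * (\<Sum>t = 1..\<tau>. \<gamma> i j t x)\<bar> | i j. 1 \<le> i \<and> i \<le> j \<and> j \<le> d}
              \<ge> w + sqrt (2 * w) + sqrt (4 * ln (2 * real d ^ 2) / real \<tau>)
                  + 2 * ln (2 * real d ^ 2) / real \<tau>}"
    define A where "A = {\<bar>(1 / real \<tau>) * (\<Sum>t = 1..\<tau>. \<gamma> i j t x)\<bar> | i j. 1 \<le> i \<and> i \<le> j \<and> j \<le> d}"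
    have Aeq: "A = (\<lambda>p. \<bar>(1 / real \<tau>) * (\<Sum>t = 1..\<tau>. \<gamma> (fst p) (snd p) t x)\<bar>) ` Pr"
      unfolding A_def Pr_def by force
    have "(1, 1) \<in> Pr" unfolding Pr_def using assms by simp
    then have "Max A \<in> A" unfolding Aeq using finPr by (intro Max_in) auto
    then obtain i j where ij: "(i, j) \<in> Pr" and mx: "Max A = \<bar>(1 / real \<tau>) * (\<Sum>t = 1..\<tau>. \<gamma> i j t x)\<bar>"
      unfolding Aeq by auto
    have xs: "x \<in> space M" and ge: "thr \<le> Max A" using x unfolding A_def thr_def L_def by auto
    have "thr \<le> \<bar>\<Sum>t = 1..\<tau>. \<gamma> i j t x\<bar> / real \<tau>"
      using ge mx tau1 by (simp add: abs_mult)
    then have "real \<tau> * thr \<le> \<bar>\<Sum>t = 1..\<tau>. \<gamma> i j t x\<bar>"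
      using tau1 by (simp add: field_simps)
    then have "real \<tau> * thr \<le> (\<Sum>t = 1..\<tau>. \<gamma> i j t x) \<or> real \<tau> * thr \<le> (\<Sum>t = 1..\<tau>. - \<gamma> i j t x)"
      by (auto simp: sum_negf abs_if split: if_splits)
    then show "x \<in> (\<Union>p\<in>Pr. Bp p \<union> Bm p)"
      using ij xs unfolding Bp_def Bm_def by force
  qed
  have "measure M {x \<in> space M.
            Max {\<bar>(1 / real \<tau>) * (\<Sum>t = 1..\<tau>. \<gamma> i j t x)\<bar> | i j. 1 \<le> i \<and> i \<le> j \<and> j \<le> d}
              \<ge> w + sqrt (2 * w) + sqrt (4 * ln (2 * real d ^ 2) / real \<tau>)
                  + 2 * ln (2 * real d ^ 2) / real \<tau>} \<le> measure M (\<Union>p\<in>Pr. Bp p \<union> Bm p)"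
    by (rule finite_measure_mono[OF sub]) (use finPr Bsets in auto)
  also have "\<dots> \<le> (\<Sum>p\<in>Pr. measure M (Bp p \<union> Bm p))"
    by (rule finite_measure_subadditive_finite) (use finPr Bsets in auto)
  also have "\<dots> \<le> (\<Sum>p\<in>Pr. 2 * exp (- (real \<tau> * u)))"
    by (rule sum_mono) (rule bound)
  also have "\<dots> = real (card Pr) * (2 * exp (- (real \<tau> * u)))" by simp
  also have "\<dots> \<le> real d ^ 2 * (2 * exp (- (real \<tau> * u)))"
    by (rule mult_right_mono[OF cardPr]) simp
  also have "\<dots> = exp (- (real \<tau> * w / 2))"
  proof -
    have tu: "real \<tau> * u = real \<tau> * w / 2 + L" unfolding u_def using tau1 by (simp add: field_simps)
    have "exp (- (real \<tau> * u)) = exp (- (real \<tau> * w / 2) - L)" unfolding tu by simp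
    also have "\<dots> = exp (- (real \<tau> * w / 2)) / exp L" by (rule exp_diff)
    also have "exp L = 2 * real d ^ 2" unfolding L_def using dd by (intro exp_ln) linarith
    finally show ?thesis using d1 by (simp add: field_simps)
  qed
  finally show ?thesis .
qed

end
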